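(* Let $(X,T)$ be a Cantor minimal system and let $E(X,T)=\{\theta\in\mathbb R:\exp(2\pi i\theta)\text{ is a continuous eigenvalue of }T\}$. For $\theta\in[0,1)\cap E(X,T)$ let $U_\theta$ be a clopen subset of $X$ such that $1_{U_\theta}-\theta\mathbf 1$ is a real coboundary (such a set exists, with $U_0=\emptyset$). For $\theta\in E(X,T)$ define $\Theta(\theta)=\lfloor\theta\rfloor[1_X]+[1_{U_{\{\theta\}}}]\in K^0(X,T)$, where $\{\theta\}=\theta-\lfloor\theta\rfloor$. Then $\Theta$ is well defined (independent of the choice of the sets $U_{\{\theta\}}$) and $\Theta:E(X,T)\to K^0(X,T)$ is an injective group homomorphism.
   Context: A Cantor minimal system is a homeomorphism $T$ of a Cantor set $X$ with all orbits dense. A continuous eigenvalue is $\lambda\in\mathbb C$ with $f\circ T=\lambda f$ for some continuous $f:X\to\mathbb S^1$. A real coboundary is a function of the form $F-F\circ T$ with $F\in C(X,\mathbb R)$. $K^0(X,T)=C(X,\mathbb Z)/\{f-f\circ T:f\in C(X,\mathbb Z)\}$ and $[f]$ denotes the class of $f$. *)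

theory Defs
  imports "HOL-Analysis.Analysis"
begin

definition cantor_set :: "'a::metric_space set \<Rightarrow> bool" where
  "cantor_set X \<longleftrightarrow> X \<noteq> {} \<and> compact X \<and> (\<forall>x\<in>X. x islimpt X)
     \<and> (\<forall>x\<in>X. connected_component_set X x = {x})"

definition orbit :: "('a \<Rightarrow> 'a) \<Rightarrow> ('a \<Rightarrow> 'a) \<Rightarrow> 'a \<Rightarrow> 'a set" where
  "orbit T S x = {(T ^^ n) x | n. True} \<union> {(S ^^ n) x | n. True}"

definition cantor_minimal_system :: "'a::metric_space set \<Rightarrow> ('a \<Rightarrow> 'a) \<Rightarrow> bool" where
  "cantor_minimal_system X T \<longleftrightarrow> cantor_set X \<and>
     (\<exists>S. homeomorphism X X T S \<and> (\<forall>x\<in>X. closure (orbit T S x) = X))"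

definition cont_eigenvalue :: "'a::metric_space set \<Rightarrow> ('a \<Rightarrow> 'a) \<Rightarrow> complex \<Rightarrow> bool" where
  "cont_eigenvalue X T lam \<longleftrightarrow> (\<exists>f::'a \<Rightarrow> complex. continuous_on X f \<and>
     (\<forall>x\<in>X. norm (f x) = 1) \<and> (\<forall>x\<in>X. f (T x) = lam * f x))"

definition eigen_set :: "'a::metric_space set \<Rightarrow> ('a \<Rightarrow> 'a) \<Rightarrow> real set" where
  "eigen_set X T = {\<theta>. cont_eigenvalue X T (exp (2 * of_real pi * \<i> * of_real \<theta>))}"

definition real_coboundary :: "'a::metric_space set \<Rightarrow> ('a \<Rightarrow> 'a) \<Rightarrow> ('a \<Rightarrow> real) \<Rightarrow> bool" where
  "real_coboundary X T g \<longleftrightarrow> (\<exists>F. continuous_on X F \<and> (\<forall>x\<in>X. g x = F x - F (T x)))"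

text \<open>Integer-valued continuous functions on X (Z carries the discrete topology,
  which is the subspace topology from R).\<close>
definition cont_int :: "'a::metric_space set \<Rightarrow> ('a \<Rightarrow> int) \<Rightarrow> bool" where
  "cont_int X f \<longleftrightarrow> continuous_on X (\<lambda>x. real_of_int (f x))"

text \<open>Equality of classes in K^0(X,T) = C(X,Z) / {h - h \<circ> T}.\<close>
definition K0_eq :: "'a::metric_space set \<Rightarrow> ('a \<Rightarrow> 'a) \<Rightarrow> ('a \<Rightarrow> int) \<Rightarrow> ('a \<Rightarrow> int) \<Rightarrow> bool" where
  "K0_eq X T f g \<longleftrightarrow> (\<exists>h. cont_int X h \<and> (\<forall>x\<in>X. f x - g x = h x - h (T x)))"

definition clopen_in :: "'a::metric_space set \<Rightarrow> 'a set \<Rightarrow> bool" where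
  "clopen_in X U \<longleftrightarrow> openin (top_of_set X) U \<and> closedin (top_of_set X) U"

definition admissible :: "'a::metric_space set \<Rightarrow> ('a \<Rightarrow> 'a) \<Rightarrow> real \<Rightarrow> 'a set \<Rightarrow> bool" where
  "admissible X T \<theta> U \<longleftrightarrow> clopen_in X U \<and>
     real_coboundary X T (\<lambda>x. indicator U x - \<theta>)"

text \<open>Representative of \<Theta>(\<theta>) = floor \<theta> [1_X] + [1_U] with U a choice of U_{frac \<theta>}.\<close>
definition Theta_rep :: "real \<Rightarrow> 'a set \<Rightarrow> 'a \<Rightarrow> int" where
  "Theta_rep \<theta> U = (\<lambda>x. \<lfloor>\<theta>\<rfloor> + indicator U x)"

end

theory Submission
  imports Defs
begin

lemma cc_eq: "connected_component_of_set (top_of_set X) x = connected_component_set X x"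
  by (auto simp: connected_component_of_def connected_component_def connectedin_subtopology)

lemma clopen_sep:
  fixes X :: "'a::metric_space set"
  assumes "compact X" "\<forall>x\<in>X. connected_component_set X x = {x}"
    and "closed A" "closed B" "A \<subseteq> X" "B \<subseteq> X" "A \<inter> B = {}"
  shows "\<exists>C. openin (top_of_set X) C \<and> closedin (top_of_set X) C \<and> A \<subseteq> C \<and> C \<inter> B = {}"
proof -
  have "separated_between (top_of_set X) A B"
  proof (subst separated_between_pointwise_left)
    show "compactin (top_of_set X) A"
      proof -
      have "compact (X \<inter> A)" using assms compact_Int_closed by blast
      then show ?thesis using assms by (simp add: compactin_subtopology Int_absorb1)
    qed
    show "(A = {} \<longrightarrow> B \<subseteq> topspace (top_of_set X)) \<and> (\<forall>x\<in>A. separated_between (top_of_set X) {x} B)"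
    proof (intro conjI ballI impI)
      show "B \<subseteq> topspace (top_of_set X)" using assms by auto
      fix x assume x: "x \<in> A"
      show "separated_between (top_of_set X) {x} B"
      proof (rule separated_between_compact_connected_component)
        show "locally_compact_space (top_of_set X)"
          using assms(1) by (simp add: compact_imp_locally_compact_space compact_space_subtopology)
        show "Hausdorff_space (top_of_set X)"
          by (simp add: Hausdorff_space_subtopology)
        have "connected_component_of_set (top_of_set X) x \<in> connected_components_of (top_of_set X)"
          using x assms by (simp add: connected_component_in_connected_components_of subset_iff)
        then show "{x} \<in> connected_components_of (top_of_set X)"
          using x assms by (simp add: cc_eq subset_iff)
        show "compactin (top_of_set X) {x}" using x assms by auto
        show "closedin (top_of_set X) B" using assms by (simp add: closed_subset)
        show "disjnt {x} B" using x assms by auto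
      qed
    qed
  qed
  then show ?thesis
    unfolding separated_between by auto
qed


lemma iter_in:
  assumes "T ` X \<subseteq> X" "x \<in> X" shows "(T ^^ n) x \<in> X"
  using assms by (induction n) auto

lemma invariant_const:
  fixes \<phi> :: "'a::metric_space \<Rightarrow> complex"
  assumes hom: "homeomorphism X X T S" and dense: "\<forall>x\<in>X. closure (orbit T S x) = X"
    and cX: "compact X" and cont: "continuous_on X \<phi>" and inv: "\<forall>x\<in>X. \<phi> (T x) = \<phi> x"
    and x0: "x0 \<in> X"
  shows "\<forall>x\<in>X. \<phi> x = \<phi> x0"
proof -
  have TX: "T ` X \<subseteq> X" and SX: "S ` X \<subseteq> X" and TS: "\<forall>y\<in>X. T (S y) = y"
    using hom by (auto simp: homeomorphism_def)
  have Sinv: "\<forall>y\<in>X. \<phi> (S y) = \<phi> y"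
    using inv TS SX by (metis image_subset_iff)
  have A: "(T ^^ n) x0 \<in> X \<and> \<phi> ((T ^^ n) x0) = \<phi> x0" for n
    by (induction n) (use x0 TX inv in auto)
  have B: "(S ^^ n) x0 \<in> X \<and> \<phi> ((S ^^ n) x0) = \<phi> x0" for n
    by (induction n) (use x0 SX Sinv in auto)
  have sub: "orbit T S x0 \<subseteq> {x \<in> X. \<phi> x = \<phi> x0}"
    unfolding orbit_def using A B by auto
  have "closed {x \<in> X. \<phi> x = \<phi> x0}"
    by (rule continuous_closed_preimage_constant[OF cont compact_imp_closed[OF cX]])
  then have "closure (orbit T S x0) \<subseteq> {x \<in> X. \<phi> x = \<phi> x0}"
    using sub closure_minimal by blast
  then show ?thesis using dense x0 by auto
qed

lemma int_cob:
  fixes X :: "'a::metric_space set"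
  assumes hom: "homeomorphism X X T S" and dense: "\<forall>x\<in>X. closure (orbit T S x) = X"
    and cX: "compact X" and ne: "X \<noteq> {}" and cF: "continuous_on X F"
    and k: "\<forall>x\<in>X. real_of_int (k x) = F x - F (T x)"
  shows "\<exists>h. cont_int X h \<and> (\<forall>x\<in>X. k x = h x - h (T x))"
proof -
  obtain x0 where x0: "x0 \<in> X" using ne by auto
  have TX: "T ` X \<subseteq> X" using hom by (auto simp: homeomorphism_def)
  define \<phi> where "\<phi> x = exp (2 * of_real pi * \<i> * of_real (F x))" for x
  have cphi: "continuous_on X \<phi>"
    unfolding \<phi>_def by (intro continuous_intros cF)
  have inv: "\<forall>x\<in>X. \<phi> (T x) = \<phi> x"
  proof
    fix x assume x: "x \<in> X"
    have "F x = F (T x) + of_int (k x)" using k x by auto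
    then have e: "complex_of_real (F x) = complex_of_real (F (T x)) + complex_of_int (k x)"
      by (metis of_real_add of_real_of_int_eq)
    have "2 * of_real pi * \<i> * of_real (F x) = 2 * of_real pi * \<i> * of_real (F (T x)) + (of_int (2 * k x) * pi) * \<i>"
      by (simp add: e algebra_simps)
    then show "\<phi> (T x) = \<phi> x" unfolding \<phi>_def by (metis exp_eq)
  qed
  have const: "\<forall>x\<in>X. \<phi> x = \<phi> x0"
    by (rule invariant_const[OF hom dense cX cphi inv x0])
  have isint: "\<exists>m::int. F x = F x0 + of_int m" if x: "x \<in> X" for x
  proof -
    from const x have "exp (2 * of_real pi * \<i> * of_real (F x)) = exp (2 * of_real pi * \<i> * of_real (F x0))"
      by (auto simp: \<phi>_def)
    then obtain n :: int where n: "2 * of_real pi * \<i> * of_real (F x) = 2 * of_real pi * \<i> * of_real (F x0) + (of_int (2 * n) * pi) * \<i>"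
      by (auto simp: exp_eq)
    then have "complex_of_real (2 * pi * F x) * \<i> = complex_of_real (2 * pi * (F x0 + of_int n)) * \<i>"
      by (simp add: algebra_simps)
    then have "2 * pi * F x = 2 * pi * (F x0 + of_int n)"
      by (metis complex_i_not_zero mult_cancel_right of_real_eq_iff)
    then show ?thesis by auto
  qed
  define h where "h x = \<lfloor>F x - F x0\<rfloor>" for x
  have hF: "real_of_int (h x) = F x - F x0" if "x \<in> X" for x
    using isint[OF that] by (auto simp: h_def)
  have "cont_int X h"
    unfolding cont_int_def
    by (rule continuous_on_eq[of _ "\<lambda>x. F x - F x0"]) (use cF hF in \<open>auto intro: continuous_intros\<close>)
  moreover have "\<forall>x\<in>X. k x = h x - h (T x)"
  proof
    fix x assume x: "x \<in> X"
    have "T x \<in> X" using TX x by auto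
    then have "real_of_int (k x) = real_of_int (h x - h (T x))"
      using hF x k by auto
    then show "k x = h x - h (T x)" by linarith
  qed
  ultimately show ?thesis by blast
qed

lemma const_cob_zero:
  fixes X :: "'a::metric_space set" and F :: "'a \<Rightarrow> real" and c :: real
  assumes cX: "compact X" and TX: "T ` X \<subseteq> X" and cF: "continuous_on X F"
    and c: "\<forall>x\<in>X. c = F x - F (T x)" and x0: "x0 \<in> X"
  shows "c = 0"
proof (rule ccontr)
  assume c0: "c \<noteq> 0"
  have A: "(T ^^ n) x0 \<in> X \<and> F ((T ^^ n) x0) = F x0 - real n * c" for n
  proof (induction n)
    case (Suc n)
    have "(T ^^ Suc n) x0 = T ((T ^^ n) x0)" by simp
    moreover have "T ((T ^^ n) x0) \<in> X" using Suc TX by auto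
    moreover have "F (T ((T ^^ n) x0)) = F ((T ^^ n) x0) - c" using Suc c by auto
    ultimately show ?case using Suc by (simp add: algebra_simps)
  qed (use x0 in auto)
  have "compact (F ` X)" using cX cF compact_continuous_image by blast
  then have "bounded (F ` X)" by (rule compact_imp_bounded)
  then obtain M where M0: "\<forall>z\<in>F ` X. norm z \<le> M" unfolding bounded_iff by blast
  have M: "\<forall>y\<in>X. \<bar>F y\<bar> \<le> M" using M0 by auto
  obtain n :: nat where n: "(2 * M + 1) / \<bar>c\<bar> < real n" using reals_Archimedean2 by blast
  have "2 * M + 1 < real n * \<bar>c\<bar>" using n c0 by (simp add: divide_less_eq)
  moreover have "real n * \<bar>c\<bar> \<le> 2 * M"
  proof -
    have "\<bar>real n * c\<bar> = \<bar>F x0 - F ((T ^^ n) x0)\<bar>" using A[of n] by simp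
    also have "\<dots> \<le> 2 * M"
    proof -
      have "\<bar>F x0\<bar> \<le> M" "\<bar>F ((T ^^ n) x0)\<bar> \<le> M" using M A[of n] x0 by auto
      then show ?thesis by linarith
    qed
    finally show ?thesis by (simp add: abs_mult)
  qed
  ultimately show False by simp
qed


lemma exist_U:
  fixes X :: "'a::metric_space set" and f :: "'a \<Rightarrow> complex"
  assumes cX: "compact X" and comps: "\<forall>x\<in>X. connected_component_set X x = {x}"
    and TX: "T ` X \<subseteq> X" and cT: "continuous_on X T"
    and cf: "continuous_on X f" and nf: "\<forall>x\<in>X. norm (f x) = 1"
    and ef: "\<forall>x\<in>X. f (T x) = exp (2 * of_real pi * \<i> * of_real \<theta>) * f x"
    and th0: "0 < \<theta>" and th1: "\<theta> < 1"
  shows "\<exists>U. U \<subseteq> X \<and> admissible X T \<theta> U"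
proof -
  define \<delta> where "\<delta> = min \<theta> (1 - \<theta>) / 2"
  have d0: "0 < \<delta>" and dth: "\<delta> < \<theta>" and dth1: "\<delta> < 1 - \<theta>" and dq: "\<delta> \<le> 1/4"
    using th0 th1 by (auto simp: \<delta>_def min_def)
  have pd0: "0 < 2 * pi * \<delta>" using d0 by simp
  have "2 * pi * \<delta> \<le> 2 * pi * (1/4)" by (rule mult_left_mono) (use dq pi_gt_zero in auto)
  then have pd1: "2 * pi * \<delta> \<le> pi / 2" by simp
  define c2 where "c2 = cos (2 * pi * \<delta>)"
  define c1 where "c1 = (c2 + 1) / 2"
  have c2pos: "0 \<le> c2" unfolding c2_def
    by (rule cos_ge_zero) (use pd0 pd1 pi_gt_zero in linarith)+
  have c2lt: "c2 < 1"
  proof -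
    have "cos (2 * pi * \<delta>) < cos 0"
      by (subst cos_mono_less_eq) (use pd0 pd1 pi_gt_zero in linarith)+
    then show ?thesis by (simp add: c2_def)
  qed
  have c12: "c2 < c1" "c1 < 1" using c2lt by (auto simp: c1_def)
  define A where "A = X \<inter> (\<lambda>x. Re (f x)) -` {c1..}"
  define B where "B = X \<inter> (\<lambda>x. Re (f x)) -` {..c2}"
  have cRe: "continuous_on X (\<lambda>x. Re (f x))" by (intro continuous_intros cf)
  have "closed A" unfolding A_def
    by (rule continuous_closed_preimage[OF cRe compact_imp_closed[OF cX]]) auto
  moreover have "closed B" unfolding B_def
    by (rule continuous_closed_preimage[OF cRe compact_imp_closed[OF cX]]) auto
  moreover have "A \<inter> B = {}" using c12 by (auto simp: A_def B_def)
  ultimately obtain C where oC: "openin (top_of_set X) C" and clC: "closedin (top_of_set X) C"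
    and AC: "A \<subseteq> C" and CB: "C \<inter> B = {}"
    using clopen_sep[OF cX comps, of A B] by (auto simp: A_def B_def)
  have CX: "C \<subseteq> X" using oC openin_imp_subset by blast
  have fne: "f x \<noteq> 0" if "x \<in> X" for x using nf that by fastforce
  have fexp: "f x = exp (\<i> * of_real (Arg (f x)))" if "x \<in> X" for x
    using Arg_eq[OF fne[OF that]] nf that by simp
  have fexp2: "f x = exp (\<i> * of_real (Arg2pi (f x)))" if "x \<in> X" for x
    using Arg2pi_eq[of "f x"] nf that by simp
  have ReC: "c2 < Re (f x)" if "x \<in> C" for x using CB CX that by (auto simp: B_def)
  have ReNC: "Re (f x) < c1" if "x \<in> X - C" for x using AC that by (auto simp: A_def)
  have ArgC: "\<bar>Arg (f x)\<bar> < 2 * pi * \<delta>" if x: "x \<in> C" for x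
  proof -
    have "Re (f x) = cos (Arg (f x))"
    proof -
      have e: "Re (exp (\<i> * of_real (Arg (f x)))) = cos (Arg (f x))" by (simp add: Re_exp)
      have "x \<in> X" using x CX by auto
      then show ?thesis using e fexp[of x] by metis
    qed
    then have "cos (2 * pi * \<delta>) < cos \<bar>Arg (f x)\<bar>" using ReC[OF x] by (simp add: c2_def)
    then show ?thesis
      by (subst (asm) cos_mono_less_eq) (use pd0 pd1 Arg_bounded[of "f x"] in \<open>auto\<close>)
  qed
  define g where "g x = (if x \<in> C then Arg (f x) / (2 * pi) else Arg2pi (f x) / (2 * pi))" for x
  have grange: "- \<delta> < g x \<and> g x < 1" if "x \<in> X" for x
  proof (cases "x \<in> C")
    case True
    then have "\<bar>Arg (f x) / (2 * pi)\<bar> < \<delta>"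
      using ArgC[OF True] pi_gt_zero by (simp add: abs_divide divide_less_eq mult.commute)
    then have "- \<delta> < Arg (f x) / (2 * pi) \<and> Arg (f x) / (2 * pi) < 1"
      using dq unfolding abs_less_iff by linarith
    then show ?thesis using True by (simp add: g_def)
  next
    case False
    have "0 \<le> Arg2pi (f x) / (2 * pi)" using Arg2pi[of "f x"] by simp
    moreover have "Arg2pi (f x) / (2 * pi) < 1" using Arg2pi[of "f x"] pi_gt_zero by (simp add: divide_less_eq)
    ultimately show ?thesis using False d0 by (simp add: g_def)
  qed
  have gexp: "f x = exp (2 * of_real pi * \<i> * of_real (g x))" if "x \<in> X" for x
  proof -
    have eq: "2 * of_real pi * \<i> * of_real (g x) = \<i> * of_real (if x \<in> C then Arg (f x) else Arg2pi (f x))"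
      using pi_gt_zero by (simp add: g_def)
    show ?thesis unfolding eq using fexp[OF that] fexp2[OF that] by (cases "x \<in> C") simp_all
  qed
  have contC: "continuous_on C (\<lambda>x. Arg (f x) / (2 * pi))"
  proof (intro continuous_intros)
    show "continuous_on C f" using cf CX continuous_on_subset by blast
    fix x assume "x \<in> C"
    then have "0 < Re (f x)" using ReC c2pos by force
    then show "f x \<notin> \<real>\<^sub>\<le>\<^sub>0" by (auto simp: complex_nonpos_Reals_iff)
  qed auto
  have contNC: "continuous_on (X - C) (\<lambda>x. Arg2pi (f x) / (2 * pi))"
  proof -
    have "\<forall>z\<in>f ` (X - C). isCont Arg2pi z"
    proof
      fix z assume "z \<in> f ` (X - C)"
      then obtain x where x: "x \<in> X - C" "z = f x" by auto
      have "z \<notin> \<real>\<^sub>\<ge>\<^sub>0"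
      proof
        assume "z \<in> \<real>\<^sub>\<ge>\<^sub>0"
        then obtain r where r: "z = of_real r" "0 \<le> r" by (auto simp: nonneg_Reals_def)
        then have "r = 1" using nf x by auto
        then show False using ReNC[OF x(1)] x r c12 by auto
      qed
      then show "isCont Arg2pi z" by (rule continuous_at_Arg2pi)
    qed
    then have "continuous_on (f ` (X - C)) Arg2pi"
      by (rule continuous_at_imp_continuous_on)
    moreover have "continuous_on (X - C) f" using cf continuous_on_subset by blast
    ultimately have "continuous_on (X - C) (\<lambda>x. Arg2pi (f x))"
      using continuous_on_compose2 by blast
    then show ?thesis by (intro continuous_intros) auto
  qed
  have cg: "continuous_on X g"
  proof -
    have XU: "X = C \<union> (X - C)" using CX by auto
    have "continuous_on (C \<union> (X - C)) (\<lambda>x. if x \<in> C then Arg (f x) / (2 * pi) else Arg2pi (f x) / (2 * pi))"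
    proof (rule continuous_on_cases_local)
      show "closedin (top_of_set (C \<union> (X - C))) C" using clC XU by simp
      have "closedin (top_of_set X) (X - C)" using oC by (intro closedin_diff) auto
      then show "closedin (top_of_set (C \<union> (X - C))) (X - C)" using XU by simp
    qed (use contC contNC in auto)
    then show ?thesis using XU by (simp add: g_def[abs_def])
  qed
  define h where "h x = g (T x) - g x - \<theta>" for x
  have ch: "continuous_on X h"
    unfolding h_def by (intro continuous_intros continuous_on_compose2[OF cg cT TX] cg)
  have hval: "h x = 0 \<or> h x = -1" if x: "x \<in> X" for x
  proof -
    have Tx: "T x \<in> X" using TX x by auto
    have "exp (2 * of_real pi * \<i> * of_real (g (T x))) = exp (2 * of_real pi * \<i> * of_real (\<theta> + g x))"
      using gexp[OF Tx] gexp[OF x] ef x by (simp add: exp_add[symmetric] algebra_simps)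
    then obtain n :: int where n: "2 * of_real pi * \<i> * of_real (g (T x)) = 2 * of_real pi * \<i> * of_real (\<theta> + g x) + (of_int (2 * n) * pi) * \<i>"
      by (auto simp: exp_eq)
    then have "complex_of_real (2 * pi * g (T x)) * \<i> = complex_of_real (2 * pi * (\<theta> + g x + of_int n)) * \<i>"
      by (simp add: algebra_simps)
    then have "2 * pi * g (T x) = 2 * pi * (\<theta> + g x + of_int n)"
      by (metis complex_i_not_zero mult_cancel_right of_real_eq_iff)
    then have hn: "h x = of_int n" using pi_gt_zero by (simp add: h_def)
    have "-2 < h x" "h x < 1" using grange[OF x] grange[OF Tx] dth dth1 by (auto simp: h_def)
    then have "-2 < n" "n < 1" using hn by auto
    then have "n = 0 \<or> n = -1" by auto
    then show ?thesis using hn by auto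
  qed
  define U where "U = X \<inter> h -` {..<-1/2}"
  have U2: "U = X \<inter> h -` {..-1/2}" using hval by (force simp: U_def)
  have "openin (top_of_set X) U" unfolding U_def
    by (rule continuous_openin_preimage_gen[OF ch]) auto
  moreover have "closedin (top_of_set X) U" unfolding U2
    by (rule continuous_closedin_preimage[OF ch]) auto
  moreover have "real_coboundary X T (\<lambda>x. indicator U x - \<theta>)"
    unfolding real_coboundary_def
  proof (intro exI conjI ballI)
    show "continuous_on X g" by (rule cg)
    fix x assume x: "x \<in> X"
    show "indicator U x - \<theta> = g x - g (T x)"
      using hval[OF x] x by (auto simp: U_def h_def indicator_def)
  qed
  ultimately show ?thesis unfolding admissible_def clopen_in_def
    by (intro exI[of _ U]) (auto simp: U_def)
qed


theorem mainTheorem5: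
  fixes X :: "'a::metric_space set" and T :: "'a \<Rightarrow> 'a"
  assumes "cantor_minimal_system X T"
  shows "admissible X T 0 {} \<and>
    (\<forall>\<theta>\<in>eigen_set X T. 0 \<le> \<theta> \<and> \<theta> < 1 \<longrightarrow> (\<exists>U. U \<subseteq> X \<and> admissible X T \<theta> U)) \<and>
    (\<forall>\<theta>\<in>eigen_set X T. \<forall>U V. U \<subseteq> X \<and> V \<subseteq> X \<and>
           admissible X T (frac \<theta>) U \<and> admissible X T (frac \<theta>) V \<longrightarrow>
           K0_eq X T (Theta_rep \<theta> U) (Theta_rep \<theta> V)) \<and>
    0 \<in> eigen_set X T \<and>
    (\<forall>\<theta>\<in>eigen_set X T. \<forall>\<eta>\<in>eigen_set X T. \<theta> + \<eta> \<in> eigen_set X T \<and> - \<theta> \<in> eigen_set X T) \<and>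
    (\<forall>\<theta>\<in>eigen_set X T. \<forall>\<eta>\<in>eigen_set X T. \<forall>U V W.
           U \<subseteq> X \<and> V \<subseteq> X \<and> W \<subseteq> X \<and>
           admissible X T (frac \<theta>) U \<and> admissible X T (frac \<eta>) V \<and>
           admissible X T (frac (\<theta> + \<eta>)) W \<longrightarrow>
           K0_eq X T (Theta_rep (\<theta> + \<eta>) W) (\<lambda>x. Theta_rep \<theta> U x + Theta_rep \<eta> V x)) \<and>
    (\<forall>\<theta>\<in>eigen_set X T. \<forall>\<eta>\<in>eigen_set X T. \<forall>U V.
           U \<subseteq> X \<and> V \<subseteq> X \<and>
           admissible X T (frac \<theta>) U \<and> admissible X T (frac \<eta>) V \<and>
           K0_eq X T (Theta_rep \<theta> U) (Theta_rep \<eta> V) \<longrightarrow> \<theta> = \<eta>)"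
  proof -
  from assms obtain S where hom: "homeomorphism X X T S" and dense: "\<forall>x\<in>X. closure (orbit T S x) = X"
    and cs: "cantor_set X" unfolding cantor_minimal_system_def by blast
  from cs have ne: "X \<noteq> {}" and cX: "compact X" and comps: "\<forall>x\<in>X. connected_component_set X x = {x}"
    unfolding cantor_set_def by auto
  have TX: "T ` X \<subseteq> X" and cT: "continuous_on X T" using hom by (auto simp: homeomorphism_def)
  obtain x0 where x0: "x0 \<in> X" using ne by auto
  have ind: "real_of_int (indicator U x) = indicator U x" for U and x :: 'a
    by (simp add: indicator_def)
  have P1: "admissible X T 0 {}"
    unfolding admissible_def clopen_in_def real_coboundary_def
    by (auto intro!: exI[of _ "\<lambda>x. 0"])
  have P2: "\<forall>\<theta>\<in>eigen_set X T. 0 \<le> \<theta> \<and> \<theta> < 1 \<longrightarrow> (\<exists>U. U \<subseteq> X \<and> admissible X T \<theta> U)"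
  proof (intro ballI impI)
    fix \<theta> assume th: "\<theta> \<in> eigen_set X T" and r: "0 \<le> \<theta> \<and> \<theta> < 1"
    show "\<exists>U. U \<subseteq> X \<and> admissible X T \<theta> U"
    proof (cases "\<theta> = 0")
      case True then show ?thesis using P1 by auto
    next
      case False
      from th obtain f :: "'a \<Rightarrow> complex" where "continuous_on X f" "\<forall>x\<in>X. norm (f x) = 1"
        "\<forall>x\<in>X. f (T x) = exp (2 * of_real pi * \<i> * of_real \<theta>) * f x"
        unfolding eigen_set_def cont_eigenvalue_def by blast
      then show ?thesis using exist_U[OF cX comps TX cT] False r by auto
    qed
  qed
  have P3: "\<forall>\<theta>\<in>eigen_set X T. \<forall>U V. U \<subseteq> X \<and> V \<subseteq> X \<and>
           admissible X T (frac \<theta>) U \<and> admissible X T (frac \<theta>) V \<longrightarrow>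
           K0_eq X T (Theta_rep \<theta> U) (Theta_rep \<theta> V)"
  proof (intro ballI allI impI)
    fix \<theta> U V assume a: "U \<subseteq> X \<and> V \<subseteq> X \<and> admissible X T (frac \<theta>) U \<and> admissible X T (frac \<theta>) V"
    then obtain F1 F2 where cF1: "continuous_on X F1" and F1: "\<forall>x\<in>X. indicator U x - frac \<theta> = F1 x - F1 (T x)"
      and cF2: "continuous_on X F2" and F2: "\<forall>x\<in>X. indicator V x - frac \<theta> = F2 x - F2 (T x)"
      unfolding admissible_def real_coboundary_def by blast
    have k1: "\<forall>x\<in>X. real_of_int (Theta_rep \<theta> U x - Theta_rep \<theta> V x) = (\<lambda>x. F1 x - F2 x) x - (\<lambda>x. F1 x - F2 x) (T x)"
      using F1 F2 by (auto simp: Theta_rep_def ind algebra_simps)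
    have cc: "continuous_on X (\<lambda>x. F1 x - F2 x)" by (intro continuous_intros cF1 cF2)
    have "\<exists>h. cont_int X h \<and> (\<forall>x\<in>X. Theta_rep \<theta> U x - Theta_rep \<theta> V x = h x - h (T x))"
      by (rule int_cob[OF hom dense cX ne cc k1])
    then show "K0_eq X T (Theta_rep \<theta> U) (Theta_rep \<theta> V)"
      unfolding K0_eq_def by simp
  qed
  have P4: "0 \<in> eigen_set X T"
    unfolding eigen_set_def cont_eigenvalue_def by (auto intro!: exI[of _ "\<lambda>x. 1"])
  have P5: "\<forall>\<theta>\<in>eigen_set X T. \<forall>\<eta>\<in>eigen_set X T. \<theta> + \<eta> \<in> eigen_set X T \<and> - \<theta> \<in> eigen_set X T"
  proof (intro ballI conjI)
    fix \<theta> \<eta> assume th: "\<theta> \<in> eigen_set X T" and et: "\<eta> \<in> eigen_set X T"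
    from th obtain f :: "'a \<Rightarrow> complex" where cf: "continuous_on X f" and nf: "\<forall>x\<in>X. norm (f x) = 1"
      and ef: "\<forall>x\<in>X. f (T x) = exp (2 * of_real pi * \<i> * of_real \<theta>) * f x"
      unfolding eigen_set_def cont_eigenvalue_def by blast
    from et obtain g :: "'a \<Rightarrow> complex" where cg: "continuous_on X g" and ng: "\<forall>x\<in>X. norm (g x) = 1"
      and eg: "\<forall>x\<in>X. g (T x) = exp (2 * of_real pi * \<i> * of_real \<eta>) * g x"
      unfolding eigen_set_def cont_eigenvalue_def by blast
    have e1: "exp (2 * of_real pi * \<i> * of_real (\<theta> + \<eta>)) = exp (2 * of_real pi * \<i> * of_real \<theta>) * exp (2 * of_real pi * \<i> * of_real \<eta>)"
      by (simp add: exp_add[symmetric] algebra_simps)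
    show "\<theta> + \<eta> \<in> eigen_set X T"
      unfolding eigen_set_def cont_eigenvalue_def
      by (intro CollectI exI[of _ "\<lambda>x. f x * g x"] conjI ballI)
         (use cf cg nf ng ef eg e1 in \<open>auto intro: continuous_intros simp: norm_mult\<close>)
    have e2: "exp (2 * of_real pi * \<i> * of_real (- \<theta>)) = cnj (exp (2 * of_real pi * \<i> * of_real \<theta>))"
      by (simp add: exp_cnj)
    show "- \<theta> \<in> eigen_set X T"
      unfolding eigen_set_def cont_eigenvalue_def
      by (intro CollectI exI[of _ "\<lambda>x. cnj (f x)"] conjI ballI)
         (use cf nf ef e2 in \<open>auto intro: continuous_intros\<close>)
  qed
  have P6: "\<forall>\<theta>\<in>eigen_set X T. \<forall>\<eta>\<in>eigen_set X T. \<forall>U V W.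
           U \<subseteq> X \<and> V \<subseteq> X \<and> W \<subseteq> X \<and>
           admissible X T (frac \<theta>) U \<and> admissible X T (frac \<eta>) V \<and>
           admissible X T (frac (\<theta> + \<eta>)) W \<longrightarrow>
           K0_eq X T (Theta_rep (\<theta> + \<eta>) W) (\<lambda>x. Theta_rep \<theta> U x + Theta_rep \<eta> V x)"
  proof (intro ballI allI impI)
    fix \<theta> \<eta> U V W assume a: "U \<subseteq> X \<and> V \<subseteq> X \<and> W \<subseteq> X \<and>
           admissible X T (frac \<theta>) U \<and> admissible X T (frac \<eta>) V \<and>
           admissible X T (frac (\<theta> + \<eta>)) W"
    then obtain F1 F2 F3 where cF1: "continuous_on X F1" and F1: "\<forall>x\<in>X. indicator U x - frac \<theta> = F1 x - F1 (T x)"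
      and cF2: "continuous_on X F2" and F2: "\<forall>x\<in>X. indicator V x - frac \<eta> = F2 x - F2 (T x)"
      and cF3: "continuous_on X F3" and F3: "\<forall>x\<in>X. indicator W x - frac (\<theta> + \<eta>) = F3 x - F3 (T x)"
      unfolding admissible_def real_coboundary_def by blast
    have k1: "\<forall>x\<in>X. real_of_int (Theta_rep (\<theta> + \<eta>) W x - (Theta_rep \<theta> U x + Theta_rep \<eta> V x))
       = (\<lambda>x. F3 x - F1 x - F2 x) x - (\<lambda>x. F3 x - F1 x - F2 x) (T x)"
    proof
      fix x assume x: "x \<in> X"
      show "real_of_int (Theta_rep (\<theta> + \<eta>) W x - (Theta_rep \<theta> U x + Theta_rep \<eta> V x))
       = (\<lambda>x. F3 x - F1 x - F2 x) x - (\<lambda>x. F3 x - F1 x - F2 x) (T x)"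
        using F1[rule_format, OF x] F2[rule_format, OF x] F3[rule_format, OF x]
        by (simp add: Theta_rep_def ind frac_def algebra_simps)
    qed
    have cc: "continuous_on X (\<lambda>x. F3 x - F1 x - F2 x)" by (intro continuous_intros cF1 cF2 cF3)
    have "\<exists>h. cont_int X h \<and> (\<forall>x\<in>X. Theta_rep (\<theta> + \<eta>) W x - (Theta_rep \<theta> U x + Theta_rep \<eta> V x) = h x - h (T x))"
      by (rule int_cob[OF hom dense cX ne cc k1])
    then show "K0_eq X T (Theta_rep (\<theta> + \<eta>) W) (\<lambda>x. Theta_rep \<theta> U x + Theta_rep \<eta> V x)"
      unfolding K0_eq_def by simp
  qed
  have P7: "\<forall>\<theta>\<in>eigen_set X T. \<forall>\<eta>\<in>eigen_set X T. \<forall>U V.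
           U \<subseteq> X \<and> V \<subseteq> X \<and>
           admissible X T (frac \<theta>) U \<and> admissible X T (frac \<eta>) V \<and>
           K0_eq X T (Theta_rep \<theta> U) (Theta_rep \<eta> V) \<longrightarrow> \<theta> = \<eta>"
  proof (intro ballI allI impI)
    fix \<theta> \<eta> U V assume a: "U \<subseteq> X \<and> V \<subseteq> X \<and>
           admissible X T (frac \<theta>) U \<and> admissible X T (frac \<eta>) V \<and>
           K0_eq X T (Theta_rep \<theta> U) (Theta_rep \<eta> V)"
    then obtain F1 F2 h where cF1: "continuous_on X F1" and F1: "\<forall>x\<in>X. indicator U x - frac \<theta> = F1 x - F1 (T x)"
      and cF2: "continuous_on X F2" and F2: "\<forall>x\<in>X. indicator V x - frac \<eta> = F2 x - F2 (T x)"
      and ch: "cont_int X h" and H: "\<forall>x\<in>X. Theta_rep \<theta> U x - Theta_rep \<eta> V x = h x - h (T x)"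
      unfolding admissible_def real_coboundary_def K0_eq_def by blast
    define G where "G x = real_of_int (h x) - F1 x + F2 x" for x
    have cG: "continuous_on X G" unfolding G_def using ch cF1 cF2
      by (auto simp: cont_int_def intro!: continuous_intros)
    have "\<forall>x\<in>X. \<theta> - \<eta> = G x - G (T x)"
    proof
      fix x assume x: "x \<in> X"
      have "real_of_int (Theta_rep \<theta> U x - Theta_rep \<eta> V x) = real_of_int (h x - h (T x))"
        using H x by simp
      then show "\<theta> - \<eta> = G x - G (T x)"
        using F1[rule_format, OF x] F2[rule_format, OF x]
        by (simp add: G_def Theta_rep_def ind frac_def algebra_simps)
    qed
    from const_cob_zero[OF cX TX cG this x0] show "\<theta> = \<eta>" by simp
  qed
  show ?thesis using P1 P2 P3 P4 P5 P6 P7 by blast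
qed

end
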